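(* Let $\mathbf L=\{L_1,\dots,L_n\}$ be a finite multiset of positive rationals, $k\in\mathbb N_{>0}$, and suppose $L_{co}\ne l^\star$. Let $\Sigma=\sum_{i\in I_{co}}L_i$, $$\underline l=\max\Bigl\{L_{co},\ \frac{\Sigma}{k+|I_{co}|}\Bigr\},\qquad \overline l=\frac{\Sigma}{k}.$$ Then $\bigl(I_{co},\ i\mapsto\lceil L_i/\overline l\rceil,\ i\mapsto\lceil L_i/\underline l\rceil\bigr)$ is an admissible restriction.
   Context: $m(l)=\sum_{i=1}^n\lfloor L_i/l\rfloor$, $c(l)=\sum_i(\lceil L_i/l\rceil-1)$; $l$ feasible iff $m(l)\ge k$; $l^\star$ is the unique optimal cut length (feasible length minimizing $c$ among feasible lengths; equals the largest feasible length). $L^{(k)}$ is the $k$-th largest element of $\mathbf L$ with multiplicity; $L_{co}=L^{(k)}$ if $k\le n$, $L_{co}=0$ if $k>n$; $I_{co}=\{i: L_i>L_{co}\}$. A triple $(I,f_l,f_u)$ with $I\subseteq[1..n]$, $f_l,f_u:I\to\mathbb N_{>0}$ is an admissible restriction if (i) for all $i\in I$, $f_l(i)=1$ or $L_i/(f_l(i)-1)$ is infeasible; (ii) for all $i\in I$, $L_i/f_u(i)$ is feasible; (iii) for all $i'\notin I$, $L_{i'}$ is feasible and $L_{i'}\ne l^\star$. *)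

theory Defs
  imports Complex_Main
begin

text \<open>Lengths are L 1, ..., L n (a multiset given by an indexed family), k pieces required.\<close>

definition num_pieces :: "(nat \<Rightarrow> rat) \<Rightarrow> nat \<Rightarrow> rat \<Rightarrow> int" where
  "num_pieces L n l = (\<Sum>i=1..n. \<lfloor>L i / l\<rfloor>)"

definition num_cuts :: "(nat \<Rightarrow> rat) \<Rightarrow> nat \<Rightarrow> rat \<Rightarrow> int" where
  "num_cuts L n l = (\<Sum>i=1..n. \<lceil>L i / l\<rceil> - 1)"

definition feasible :: "(nat \<Rightarrow> rat) \<Rightarrow> nat \<Rightarrow> nat \<Rightarrow> rat \<Rightarrow> bool" where
  "feasible L n k l \<longleftrightarrow> l > 0 \<and> num_pieces L n l \<ge> int k"

definition lstar :: "(nat \<Rightarrow> rat) \<Rightarrow> nat \<Rightarrow> nat \<Rightarrow> rat" where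
  "lstar L n k = (GREATEST l. feasible L n k l)"

definition Lco :: "(nat \<Rightarrow> rat) \<Rightarrow> nat \<Rightarrow> nat \<Rightarrow> rat" where
  "Lco L n k = (if k \<le> n then rev (sort (map L [1..<Suc n])) ! (k - 1) else 0)"

definition Ico :: "(nat \<Rightarrow> rat) \<Rightarrow> nat \<Rightarrow> nat \<Rightarrow> nat set" where
  "Ico L n k = {i \<in> {1..n}. L i > Lco L n k}"

definition admissible_restriction ::
  "(nat \<Rightarrow> rat) \<Rightarrow> nat \<Rightarrow> nat \<Rightarrow> nat set \<Rightarrow> (nat \<Rightarrow> nat) \<Rightarrow> (nat \<Rightarrow> nat) \<Rightarrow> bool" where
  "admissible_restriction L n k I fl fu \<longleftrightarrow>
     I \<subseteq> {1..n} \<and>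
     (\<forall>i\<in>I. fl i > 0 \<and> fu i > 0) \<and>
     (\<forall>i\<in>I. fl i = 1 \<or> \<not> feasible L n k (L i / of_nat (fl i - 1))) \<and>
     (\<forall>i\<in>I. feasible L n k (L i / of_nat (fu i))) \<and>
     (\<forall>i'\<in>{1..n} - I. feasible L n k (L i') \<and> L i' \<noteq> lstar L n k)"

end

theory Submission
  imports Defs
begin

lemma kth_count:
  fixes L :: "nat \<Rightarrow> rat"
  assumes "k \<le> n" "k > 0"
  shows "k \<le> card {j\<in>{1..n}. Lco L n k \<le> L j}"
proof -
  define xs where "xs = map L [1..<Suc n]"
  define ys where "ys = rev (sort xs)"
  have co: "Lco L n k = ys ! (k-1)" using assms by (simp add: Lco_def ys_def xs_def)
  have len: "length ys = n" by (simp add: ys_def xs_def)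
  have srt: "sorted (sort xs)" by simp
  have ge: "\<forall>x\<in>set (take k ys). ys ! (k-1) \<le> x"
  proof
    fix x assume "x \<in> set (take k ys)"
    then obtain t where t: "t < length (take k ys)" "x = take k ys ! t" by (auto simp: in_set_conv_nth)
    then have tk: "t < k" "x = ys ! t" using len assms by auto
    have "ys ! t = sort xs ! (n - Suc t)" "ys ! (k-1) = sort xs ! (n - k)"
      using len assms tk by (auto simp: ys_def rev_nth xs_def)
    moreover have "n - k \<le> n - Suc t" using tk by auto
    moreover have "n - Suc t < length (sort xs)" using tk assms by (simp add: xs_def)
    ultimately show "ys ! (k-1) \<le> x" using sorted_nth_mono[OF srt] tk by auto
  qed
  let ?P = "\<lambda>x. Lco L n k \<le> x"
  have "filter ?P (take k ys) = take k ys" using ge co by (simp add: filter_id_conv)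
  then have "k \<le> length (filter ?P (take k ys))" using len assms by simp
  also have "\<dots> \<le> length (filter ?P ys)"
    by (metis append_take_drop_id filter_append le_add1 length_append)
  also have "length (filter ?P ys) = length (filter ?P xs)"
    by (simp add: ys_def rev_filter[symmetric] filter_sort)
  also have "\<dots> = length (filter (\<lambda>j. ?P (L j)) [1..<Suc n])" by (simp add: xs_def filter_map comp_def)
  also have "\<dots> = card (set (filter (\<lambda>j. ?P (L j)) [1..<Suc n]))" by (rule distinct_card[symmetric]) simp
  also have "set (filter (\<lambda>j. ?P (L j)) [1..<Suc n]) = {j\<in>{1..n}. ?P (L j)}" by auto
  finally show ?thesis .
qed

lemma np_mono:
  fixes L :: "nat \<Rightarrow> rat"
  assumes "\<forall>i\<in>{1..n}. L i > 0" "0 < l" "l \<le> l'"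
  shows "num_pieces L n l' \<le> num_pieces L n l"
  unfolding num_pieces_def
proof (rule sum_mono)
  fix i assume "i \<in> {1..n}"
  then have "L i > 0" using assms by auto
  then have "L i / l' \<le> L i / l" using assms by (intro divide_left_mono) auto
  then show "\<lfloor>L i / l'\<rfloor> \<le> \<lfloor>L i / l\<rfloor>" by (rule floor_mono)
qed

lemma feas_mono:
  fixes L :: "nat \<Rightarrow> rat"
  assumes "\<forall>i\<in>{1..n}. L i > 0" "feasible L n k l" "0 < l'" "l' \<le> l"
  shows "feasible L n k l'"
  using assms np_mono[of n L l' l] unfolding feasible_def by auto

lemma np_count:
  fixes L :: "nat \<Rightarrow> rat"
  assumes "\<forall>i\<in>{1..n}. L i > 0" "0 < l"
  shows "int (card {j\<in>{1..n}. l \<le> L j}) \<le> num_pieces L n l"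
proof -
  have "int (card {j\<in>{1..n}. l \<le> L j}) = (\<Sum>j=1..n. (if l \<le> L j then 1 else 0))"
    by (simp add: sum.If_cases Int_def)
  also have "\<dots> \<le> num_pieces L n l" unfolding num_pieces_def
  proof (rule sum_mono)
    fix j assume j: "j \<in> {1..n}"
    show "(if l \<le> L j then 1 else 0) \<le> \<lfloor>L j / l\<rfloor>"
    proof (cases "l \<le> L j")
      case True then have "1 \<le> L j / l" using assms by simp
      then show ?thesis using True by simp
    next
      case False have "L j > 0" using assms j by auto
      then show ?thesis using False assms by simp
    qed
  qed
  finally show ?thesis .
qed

lemma np_sub:
  fixes L :: "nat \<Rightarrow> rat"
  assumes "\<forall>i\<in>{1..n}. L i > 0" "0 < l" "I \<subseteq> {1..n}"
  shows "(\<Sum>j\<in>I. L j / l - 1) \<le> of_int (num_pieces L n l)"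
proof -
  have "(\<Sum>j\<in>I. L j / l - 1) \<le> (\<Sum>j\<in>I. of_int \<lfloor>L j / l\<rfloor>)"
    by (rule sum_mono) linarith
  also have "\<dots> \<le> (\<Sum>j\<in>{1..n}. of_int \<lfloor>L j / l\<rfloor>)"
    using assms by (intro sum_mono2) (auto intro!: divide_nonneg_pos less_imp_le)
  finally show ?thesis by (simp add: num_pieces_def)
qed

lemma lstar_ex:
  fixes L :: "nat \<Rightarrow> rat"
  assumes Lp: "\<forall>i\<in>{1..n}. L i > 0" and k: "k > 0" and n: "n \<ge> 1"
  shows "\<exists>g. feasible L n k g \<and> (\<forall>l. feasible L n k l \<longrightarrow> l \<le> g)"
proof -
  have L1: "L 1 > 0" using Lp n by auto
  define l0 where "l0 = L 1 / of_nat k"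
  have l0p: "l0 > 0" using L1 k by (simp add: l0_def)
  have "int (card {j\<in>{1..n}. l0 \<le> L j}) \<le> num_pieces L n l0" using np_count[OF Lp l0p] .
  have f0: "feasible L n k l0"
  proof -
    have "of_int \<lfloor>L 1 / l0\<rfloor> = (of_nat k :: rat)" using L1 k by (simp add: l0_def)
    then have e: "\<lfloor>L 1 / l0\<rfloor> = int k" by (metis floor_of_nat of_int_of_nat_eq floor_of_int)
    have "\<lfloor>L 1 / l0\<rfloor> \<le> num_pieces L n l0" unfolding num_pieces_def
      using n Lp l0p by (intro member_le_sum) (auto intro!: divide_nonneg_pos less_imp_le)
    then show ?thesis using e l0p by (simp add: feasible_def)
  qed
  define M where "M = (\<Sum>i=1..n. L i)"
  have LM: "L i \<le> M" if "i \<in> {1..n}" for i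
    unfolding M_def using that Lp by (intro member_le_sum) (auto intro: less_imp_le)
  define N where "N = nat \<lceil>M / l0\<rceil>"
  define C where "C = (\<lambda>(i,j). L i / of_nat j) ` ({1..n} \<times> {1..N})"
  define S where "S = {c\<in>C. feasible L n k c}"
  have finS: "finite S" unfolding S_def C_def by auto
  have kN: "k \<le> N"
  proof -
    have "of_nat k = L 1 / l0" using L1 k by (simp add: l0_def)
    also have "\<dots> \<le> M / l0" using LM[of 1] n l0p by (simp add: divide_right_mono)
    finally have "of_nat k \<le> M / l0" .
    then show ?thesis unfolding N_def by linarith
  qed
  have l0S: "l0 \<in> S" unfolding S_def C_def using f0 n k kN
    by (auto simp: l0_def intro!: image_eqI[where x="(1,k)"])
  define g where "g = Max S"
  have gS: "g \<in> S" unfolding g_def using finS l0S by (intro Max_in) auto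
  have "\<forall>l. feasible L n k l \<longrightarrow> l \<le> g"
  proof (intro allI impI)
    fix l assume fl: "feasible L n k l"
    show "l \<le> g"
    proof (cases "l \<le> l0")
      case True then show ?thesis using Max_ge[OF finS l0S] g_def by simp
    next
      case False
      have lp: "l > 0" using fl by (simp add: feasible_def)
      define f where "f = (\<lambda>i. \<lfloor>L i / l\<rfloor>)"
      define P where "P = {i\<in>{1..n}. f i \<ge> 1}"
      have Pne: "P \<noteq> {}"
      proof
        assume "P = {}"
        then have "\<forall>i\<in>{1..n}. f i \<le> 0" unfolding P_def by auto
        then have "num_pieces L n l \<le> 0" unfolding num_pieces_def f_def by (intro sum_nonpos) auto
        then show False using fl k by (simp add: feasible_def)
      qed
      have finP: "finite P" unfolding P_def by auto
      define D where "D = (\<lambda>i. L i / of_int (f i)) ` P"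
      define c where "c = Min D"
      have cD: "c \<in> D" unfolding c_def D_def using finP Pne by (intro Min_in) auto
      have cle: "c \<le> L i / of_int (f i)" if "i \<in> P" for i
        unfolding c_def D_def using finP that by (intro Min_le) auto
      obtain i where iP: "i \<in> P" and ci: "c = L i / of_int (f i)" using cD D_def by auto
      have Li: "L i > 0" using iP Lp P_def by auto
      have fi1: "f i \<ge> 1" using iP P_def by auto
      have fiL: "of_int (f i) \<le> L i / l" unfolding f_def by simp
      have lc: "l \<le> c"
      proof -
        have "of_int (f i) * l \<le> L i" using fiL lp by (simp add: pos_le_divide_eq)
        then show ?thesis unfolding ci using fi1 by (simp add: pos_le_divide_eq mult.commute)
      qed
      have cp: "c > 0" using lp lc by simp
      have "num_pieces L n l \<le> num_pieces L n c" unfolding num_pieces_def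
      proof (rule sum_mono)
        fix j assume j: "j \<in> {1..n}"
        have Lj: "L j > 0" using j Lp by auto
        show "\<lfloor>L j / l\<rfloor> \<le> \<lfloor>L j / c\<rfloor>"
        proof (cases "j \<in> P")
          case True
          have fj1: "f j \<ge> 1" using True P_def by auto
          have "c * of_int (f j) \<le> L j" using cle[OF True] fj1 by (simp add: pos_le_divide_eq)
          then have "of_int (f j) \<le> L j / c" using cp by (simp add: pos_le_divide_eq mult.commute)
          then show ?thesis unfolding f_def by linarith
        next
          case False
          then have "f j \<le> 0" using j P_def by auto
          moreover have "0 \<le> L j / c" using Lj cp by simp
          ultimately show ?thesis unfolding f_def by linarith
        qed
      qed
      then have fc: "feasible L n k c" using fl cp by (simp add: feasible_def)
      have "L i / l < L i / l0" using False l0p Li by (simp add: divide_strict_left_mono)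
      also have "\<dots> \<le> M / l0" using LM iP P_def l0p by (auto simp: divide_right_mono)
      finally have "of_int (f i) < M / l0" using fiL by linarith
      then have fiN: "nat (f i) \<le> N" unfolding N_def by linarith
      have "c = L i / of_nat (nat (f i))" using ci fi1 by simp
      then have "c \<in> C" unfolding C_def using iP P_def fi1 fiN
        by (auto intro!: image_eqI[where x="(i, nat (f i))"])
      then have "c \<in> S" using fc S_def by auto
      then have "c \<le> g" using Max_ge[OF finS] g_def by simp
      then show ?thesis using lc by simp
    qed
  qed
  then show ?thesis using gS S_def by auto
qed

lemma lstar_props:
  fixes L :: "nat \<Rightarrow> rat"
  assumes "\<forall>i\<in>{1..n}. L i > 0" "k > 0" "n \<ge> 1"
  shows "feasible L n k (lstar L n k)" "\<And>l. feasible L n k l \<Longrightarrow> l \<le> lstar L n k"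
proof -
  obtain g where g: "feasible L n k g" "\<forall>l. feasible L n k l \<longrightarrow> l \<le> g"
    using lstar_ex[OF assms] by blast
  have "lstar L n k = g" unfolding lstar_def using g by (intro Greatest_equality) auto
  then show "feasible L n k (lstar L n k)" "\<And>l. feasible L n k l \<Longrightarrow> l \<le> lstar L n k" using g by auto
qed

theorem mainTheorem12:
  fixes L :: "nat \<Rightarrow> rat" and n k :: nat
  assumes n_pos: "n \<ge> 1"
    and L_pos: "\<forall>i\<in>{1..n}. L i > 0"
    and k_pos: "k > 0"
    and co_ne: "Lco L n k \<noteq> lstar L n k"
  shows "let \<Sigma> = (\<Sum>i\<in>Ico L n k. L i);
             lo = max (Lco L n k) (\<Sigma> / of_nat (k + card (Ico L n k)));
             up = \<Sigma> / of_nat k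
         in admissible_restriction L n k (Ico L n k)
              (\<lambda>i. nat \<lceil>L i / up\<rceil>) (\<lambda>i. nat \<lceil>L i / lo\<rceil>)"
proof -
  define co where "co = Lco L n k"
  define I where "I = Ico L n k"
  define ls where "ls = lstar L n k"
  define S where "S = (\<Sum>i\<in>I. L i)"
  define c where "c = card I"
  define lo where "lo = max co (S / of_nat (k + c))"
  define up where "up = S / of_nat k"
  have fls: "feasible L n k ls" using lstar_props[OF L_pos k_pos n_pos] ls_def by simp
  have gls: "\<And>l. feasible L n k l \<Longrightarrow> l \<le> ls" using lstar_props[OF L_pos k_pos n_pos] ls_def by simp
  have lsp: "ls > 0" using fls by (simp add: feasible_def)
  have Isub: "I \<subseteq> {1..n}" unfolding I_def Ico_def by auto
  have finI: "finite I" using Isub finite_subset by blast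
  have notI: "L j \<le> co" if "j \<in> {1..n}" "j \<notin> I" for j
    using that unfolding I_def Ico_def co_def by auto
  have co_feas: "feasible L n k co" if "k \<le> n" "co > 0"
  proof -
    have "k \<le> card {j\<in>{1..n}. co \<le> L j}" using kth_count[OF that(1) k_pos] co_def by simp
    then show ?thesis using np_count[OF L_pos that(2)] that by (simp add: feasible_def)
  qed
  have co_ge0: "co \<ge> 0"
  proof (cases "k \<le> n")
    case True
    have "co \<in> set (rev (sort (map L [1..<Suc n])))" unfolding co_def Lco_def using True k_pos
      by (simp del: set_rev set_sort add: nth_mem)
    then show ?thesis using L_pos by (auto intro: less_imp_le)
  next
    case False then show ?thesis by (simp add: co_def Lco_def)
  qed
  have co_ls: "co < ls"
  proof (cases "k \<le> n \<and> co > 0")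
    case True then have "co \<le> ls" using co_feas gls by blast
    then show ?thesis using co_ne co_def ls_def by simp
  next
    case False
    then have "co = 0" using co_ge0 by (cases "k \<le> n") (auto simp: co_def Lco_def)
    then show ?thesis using lsp by simp
  qed
  have kS: "of_nat k * ls \<le> S"
  proof -
    have "num_pieces L n ls = (\<Sum>j\<in>I. \<lfloor>L j / ls\<rfloor>)" unfolding num_pieces_def
    proof (rule sum.mono_neutral_right)
      show "\<forall>j\<in>{1..n} - I. \<lfloor>L j / ls\<rfloor> = 0"
      proof
        fix j assume j: "j \<in> {1..n} - I"
        have "L j < ls" using notI[of j] j co_ls by auto
        moreover have "L j > 0" using j L_pos by auto
        ultimately show "\<lfloor>L j / ls\<rfloor> = 0" using lsp by (simp add: floor_eq_iff)
      qed
    qed (use Isub in auto)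
    also have "of_int (\<Sum>j\<in>I. \<lfloor>L j / ls\<rfloor>) \<le> (\<Sum>j\<in>I. L j / ls)"
      by (simp add: sum_mono) 
    finally have "of_nat k \<le> (\<Sum>j\<in>I. L j / ls)" using fls by (simp add: feasible_def)
    also have "\<dots> = S / ls" by (simp add: S_def sum_divide_distrib)
    finally show ?thesis using lsp by (simp add: pos_le_divide_eq)
  qed
  have Sp: "S > 0" proof -
    have "0 < of_nat k * ls" using k_pos lsp by simp
    then show ?thesis using kS by linarith
  qed
  have upls: "ls \<le> up" using kS k_pos by (simp add: up_def pos_le_divide_eq mult.commute)
  have lop: "lo > 0"
  proof -
    have "S / of_nat (k + c) > 0" using Sp k_pos by simp
    then show ?thesis unfolding lo_def by linarith
  qed
  have lo_feas: "feasible L n k lo"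
  proof (cases "co \<ge> S / of_nat (k + c)")
    case True
    then have "co > 0" proof -
      have "S / of_nat (k + c) > 0" using Sp k_pos by simp
      then show ?thesis using True by linarith
    qed
    moreover have "k \<le> n" using \<open>co > 0\<close> by (simp add: co_def Lco_def split: if_splits)
    ultimately show ?thesis using co_feas True by (simp add: lo_def)
  next
    case False
    then have lo: "lo = S / of_nat (k + c)" by (simp add: lo_def)
    have "(\<Sum>j\<in>I. L j / lo - 1) \<le> of_int (num_pieces L n lo)" using np_sub[OF L_pos lop Isub] .
    moreover have "(\<Sum>j\<in>I. L j / lo - 1) = S / lo - of_nat c"
      by (simp add: sum_subtractf S_def sum_divide_distrib c_def)
    moreover have "S / lo = of_nat (k + c)" using lo Sp k_pos by simp
    ultimately have "of_nat k \<le> (of_int (num_pieces L n lo) :: rat)" by simp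
    then show ?thesis using lop by (simp add: feasible_def)
  qed
  have upp: "up > 0" using Sp k_pos by (simp add: up_def)
  have A: "\<forall>i\<in>I. nat \<lceil>L i / up\<rceil> > 0 \<and> nat \<lceil>L i / lo\<rceil> > 0"
  proof
    fix i assume "i \<in> I"
    then have Li: "L i > 0" using Isub L_pos by auto
    have "\<lceil>L i / up\<rceil> > 0" "\<lceil>L i / lo\<rceil> > 0" using Li upp lop by simp_all
    then show "nat \<lceil>L i / up\<rceil> > 0 \<and> nat \<lceil>L i / lo\<rceil> > 0" by simp
  qed
  have B: "\<forall>i\<in>I. nat \<lceil>L i / up\<rceil> = 1 \<or> \<not> feasible L n k (L i / of_nat (nat \<lceil>L i / up\<rceil> - 1))"
  proof
    fix i assume i: "i \<in> I"
    define q where "q = \<lceil>L i / up\<rceil>"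
    have Li: "L i > 0" using i Isub L_pos by auto
    show "nat \<lceil>L i / up\<rceil> = 1 \<or> \<not> feasible L n k (L i / of_nat (nat \<lceil>L i / up\<rceil> - 1))"
    proof (cases "q \<ge> 2")
      case False then have "q = 1" proof -
        have "q > 0" using Li upp q_def by simp
        then show ?thesis using False by linarith
      qed
      then show ?thesis using q_def by simp
    next
      case True
      have e: "(of_nat (nat q - 1) :: rat) = of_int q - 1" using True by (simp add: of_nat_diff)
      have "of_int q - 1 < L i / up" unfolding q_def by linarith
      then have "(of_int q - 1) * up < L i" using upp by (simp add: pos_less_divide_eq)
      then have "up < L i / (of_int q - 1)" using True by (simp add: pos_less_divide_eq mult.commute)
      then have "\<not> feasible L n k (L i / (of_int q - 1))" by (metis gls upls order.trans not_le)
      then show ?thesis using e q_def by simp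
    qed
  qed
  have C: "\<forall>i\<in>I. feasible L n k (L i / of_nat (nat \<lceil>L i / lo\<rceil>))"
  proof
    fix i assume i: "i \<in> I"
    have Li: "L i > 0" using i Isub L_pos by auto
    define q where "q = \<lceil>L i / lo\<rceil>"
    have q1: "q \<ge> 1" proof -
      have "q > 0" using Li lop q_def by simp
      then show ?thesis by linarith
    qed
    have "L i / lo \<le> of_int q" unfolding q_def by simp
    then have "L i \<le> of_int q * lo" using lop by (simp add: pos_divide_le_eq)
    then have "L i / of_int q \<le> lo" using q1 by (simp add: pos_divide_le_eq mult.commute)
    moreover have "L i / of_int q > 0" using Li q1 by simp
    ultimately have "feasible L n k (L i / of_int q)" using feas_mono[OF L_pos lo_feas] by blast
    then show "feasible L n k (L i / of_nat (nat \<lceil>L i / lo\<rceil>))" using q1 q_def by simp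
  qed
  have D: "\<forall>i'\<in>{1..n} - I. feasible L n k (L i') \<and> L i' \<noteq> ls"
  proof
    fix j assume j: "j \<in> {1..n} - I"
    have Lj: "L j > 0" "L j \<le> co" using j L_pos notI by auto
    have "co > 0" using Lj by simp
    then have kn: "k \<le> n" by (simp add: co_def Lco_def split: if_splits)
    have "k \<le> card {j\<in>{1..n}. co \<le> L j}" using kth_count[OF kn k_pos] co_def by simp
    also have "\<dots> \<le> card {i\<in>{1..n}. L j \<le> L i}"
    proof (rule card_mono)
      show "{j \<in> {1..n}. co \<le> L j} \<subseteq> {i \<in> {1..n}. L j \<le> L i}"
        using Lj(2) by (auto dest: order.trans)
    qed simp
    finally have "feasible L n k (L j)" using np_count[OF L_pos Lj(1)] Lj by (simp add: feasible_def)
    then show "feasible L n k (L j) \<and> L j \<noteq> ls" using Lj co_ls by auto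
  qed
  have "admissible_restriction L n k I (\<lambda>i. nat \<lceil>L i / up\<rceil>) (\<lambda>i. nat \<lceil>L i / lo\<rceil>)"
    unfolding admissible_restriction_def ls_def[symmetric] using Isub A B C D by blast
  then show ?thesis unfolding Let_def lo_def up_def c_def S_def I_def co_def .
qed

end
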